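(* For $n\ge2$ and all $P,Q\in\Gamma_n$, $D_{h\Delta}(P\|Q)\le 3D_{hI}(P\|Q)$.
   Context: $\Gamma_n=\{P=(p_1,\dots,p_n): p_i>0,\ \sum p_i=1\}$. $h(P\|Q)=\frac12\sum_{i=1}^n(\sqrt{p_i}-\sqrt{q_i})^2$; $\Delta(P\|Q)=\sum_{i=1}^n\frac{(p_i-q_i)^2}{p_i+q_i}$; $I(P\|Q)=\frac12\Big[\sum_{i=1}^n p_i\ln\frac{2p_i}{p_i+q_i}+\sum_{i=1}^n q_i\ln\frac{2q_i}{p_i+q_i}\Big]$. $D_{h\Delta}=h-\frac14\Delta$, $D_{hI}=h-I$. *)

theory Defs
  imports Complex_Main
begin

definition Gamma :: "nat \<Rightarrow> (nat \<Rightarrow> real) set" where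
  "Gamma n = {p. (\<forall>i<n. p i > 0) \<and> (\<Sum>i<n. p i) = 1}"

definition hellinger :: "nat \<Rightarrow> (nat \<Rightarrow> real) \<Rightarrow> (nat \<Rightarrow> real) \<Rightarrow> real" where
  "hellinger n p q = (1/2) * (\<Sum>i<n. (sqrt (p i) - sqrt (q i))^2)"

definition triangular :: "nat \<Rightarrow> (nat \<Rightarrow> real) \<Rightarrow> (nat \<Rightarrow> real) \<Rightarrow> real" where
  "triangular n p q = (\<Sum>i<n. (p i - q i)^2 / (p i + q i))"

definition jensen_shannon :: "nat \<Rightarrow> (nat \<Rightarrow> real) \<Rightarrow> (nat \<Rightarrow> real) \<Rightarrow> real" where
  "jensen_shannon n p q = (1/2) * ((\<Sum>i<n. p i * ln (2 * p i / (p i + q i)))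
      + (\<Sum>i<n. q i * ln (2 * q i / (p i + q i))))"

definition D_hDelta :: "nat \<Rightarrow> (nat \<Rightarrow> real) \<Rightarrow> (nat \<Rightarrow> real) \<Rightarrow> real" where
  "D_hDelta n p q = hellinger n p q - (1/4) * triangular n p q"

definition D_hI :: "nat \<Rightarrow> (nat \<Rightarrow> real) \<Rightarrow> (nat \<Rightarrow> real) \<Rightarrow> real" where
  "D_hI n p q = hellinger n p q - jensen_shannon n p q"

end

theory Submission
  imports Defs
begin

definition gg :: "real \<Rightarrow> real" where
  "gg t = 2 - 2*sqrt(1-t^2) + t^2/2 - 3/2*((1+t)*ln(1+t)+(1-t)*ln(1-t))"

definition gd :: "real \<Rightarrow> real" where
  "gd t = 2*t/sqrt(1-t^2) + t - 3/2*(ln(1+t) - ln(1-t))"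

lemma gg_deriv:
  assumes "-1 < t" "t < 1"
  shows "(gg has_real_derivative gd t) (at t)"
proof -
  have p: "0 < 1 - t^2" using assms by (simp add: abs_square_less_1)
  have s: "sqrt (1-t^2) > 0" using p by simp
  show ?thesis
    unfolding gg_def[abs_def] gd_def
    using assms p s apply (auto intro!: derivative_eq_intros)
    apply (simp add: field_simps)
    done
qed

lemma gd_deriv:
  assumes "-1 < t" "t < 1"
  shows "(gd has_real_derivative (2/(sqrt(1-t^2))^3 + 1 - 3/(1-t^2))) (at t)"
proof -
  have p: "0 < 1 - t^2" using assms by (simp add: abs_square_less_1)
  have s: "sqrt (1-t^2) > 0" using p by simp
  have ss: "sqrt (1-t^2) ^2 = 1 - t^2" using p by simp
  show ?thesis
    unfolding gd_def[abs_def]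
    using assms p s apply (auto intro!: derivative_eq_intros)
  proof -
    define r where "r = sqrt (1-t^2)"
    have r2: "1 - t^2 = r^2" using ss r_def by simp
    have rp: "r > 0" using s r_def by simp
    have a: "1 - t \<noteq> 0" "1 + t \<noteq> 0" using assms by auto
    have e1: "6 / (1 + t) + 6 / (1 - t) = 12 / r^2" unfolding r2[symmetric] using a
      by (simp add: field_simps power2_eq_square)
    have rt: "r*r + t*t = 1" using r2 by (simp add: power2_eq_square)
    have e2: "(2 * r + 2 * t * (inverse r * t)) / r^2 = 2 / r^3"
    proof -
      have "2 * r + 2 * t * (inverse r * t) = 2 * (r*r + t*t) / r" using rp
        by (simp add: field_simps)
      also have "... = 2 / r" using rt by simp
      finally show ?thesis using rp by (simp add: field_simps power2_eq_square power3_eq_cube)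
    qed
    show "(2 * sqrt (1 - t\<^sup>2) + 2 * t * (inverse (sqrt (1 - t\<^sup>2)) * t)) /
        (1 - t\<^sup>2) -
        (6 / (1 + t) + 6 / (1 - t)) / 4 =
        2 / sqrt (1 - t\<^sup>2) ^ 3 - 3 / (1 - t\<^sup>2)"
      unfolding r_def[symmetric] r2 e1 using rp e2 by simp
  qed
qed
lemma gdd_nonneg:
  assumes "-1 < t" "t < 1"
  shows "0 \<le> 2/(sqrt(1-t^2))^3 + 1 - 3/(1-t^2)"
proof -
  have p: "0 < 1 - t^2" using assms by (simp add: abs_square_less_1)
  define r where "r = sqrt (1-t^2)"
  have r2: "1 - t^2 = r^2" using p r_def by simp
  have rp: "r > 0" using p r_def by simp
  have "2/r^3 + 1 - 3/r^2 = (1-r)^2*(r+2)/r^3" using rp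
    by (simp add: field_simps power2_eq_square power3_eq_cube)
  also have "... \<ge> 0" using rp by simp
  finally show ?thesis unfolding r_def[symmetric] r2 using rp by simp
qed

lemma gd_sign:
  assumes "-1 < t" "t < 1"
  shows "(0 \<le> t \<longrightarrow> 0 \<le> gd t) \<and> (t \<le> 0 \<longrightarrow> gd t \<le> 0)"
proof -
  have g0: "gd 0 = 0" by (simp add: gd_def)
  have A: "0 \<le> t \<Longrightarrow> gd 0 \<le> gd t"
    by (rule deriv_nonneg_imp_mono[OF gd_deriv gdd_nonneg]) (use assms in auto)
  have B: "t \<le> 0 \<Longrightarrow> gd t \<le> gd 0"
    by (rule deriv_nonneg_imp_mono[OF gd_deriv gdd_nonneg]) (use assms in auto)
  show ?thesis using A B g0 by auto
qed

lemma gg_nonneg: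
  assumes "-1 < t" "t < 1"
  shows "0 \<le> gg t"
proof -
  have g0: "gg 0 = 0" by (simp add: gg_def)
  have A: "0 \<le> t \<Longrightarrow> gg 0 \<le> gg t"
    by (rule deriv_nonneg_imp_mono[OF gg_deriv]) (use assms gd_sign in auto)
  have B: "t \<le> 0 \<Longrightarrow> gg 0 \<le> gg t"
    by (rule deriv_nonpos_imp_antimono[OF gg_deriv]) (use assms gd_sign in auto)
  show ?thesis using A B g0 by force
qed
lemma termwise:
  fixes a b :: real
  assumes a: "a > 0" and b: "b > 0"
  shows "3/2*(a*ln(2*a/(a+b)) + b*ln(2*b/(a+b))) \<le> (sqrt a - sqrt b)^2 + (a-b)^2/(4*(a+b))"
proof -
  define s where "s = a + b"
  have sp: "s > 0" using a b s_def by simp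
  define t where "t = (a - b)/s"
  have t1: "1 + t = 2*a/s" using sp unfolding t_def s_def by (simp add: field_simps)
  have t2: "1 - t = 2*b/s" using sp unfolding t_def s_def by (simp add: field_simps)
  have tb: "-1 < t" "t < 1" using t1 t2 a b sp by (smt (verit) divide_pos_pos)+
  have "1 - t^2 = (1+t)*(1-t)" by (simp add: algebra_simps power2_eq_square)
  also have "... = (2*sqrt a * sqrt b / s)^2" unfolding t1 t2 using a b
    by (simp add: power2_eq_square field_simps)
  finally have sq: "sqrt (1 - t^2) = 2*sqrt a * sqrt b / s" using a b sp by simp
  have g: "0 \<le> gg t" by (rule gg_nonneg[OF tb])
  hence "0 \<le> s/2 * gg t" using sp by simp
  also have "s/2 * gg t = (sqrt a - sqrt b)^2 + (a-b)^2/(4*(a+b)) - 3/2*(a*ln(2*a/(a+b)) + b*ln(2*b/(a+b)))"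
  proof -
    have "s/2 * gg t = s - 2*sqrt a*sqrt b + s*t^2/4 - 3/2*(a*ln(2*a/s) + b*ln(2*b/s))"
      unfolding gg_def sq t1 t2 using sp by (simp add: field_simps)
    also have "s*t^2/4 = (a-b)^2/(4*s)" unfolding t_def using sp
      by (simp add: power2_eq_square field_simps)
    also have "s - 2*sqrt a*sqrt b = (sqrt a - sqrt b)^2" unfolding s_def using a b
      by (simp add: power2_eq_square algebra_simps)
    finally show ?thesis unfolding s_def .
  qed
  finally show ?thesis by simp
qed

lemma main_ineq:
  fixes n :: nat and P Q :: "nat \<Rightarrow> real"
  assumes "P \<in> Gamma n" and "Q \<in> Gamma n"
  shows "D_hDelta n P Q \<le> 3 * D_hI n P Q"
proof -
  have pos: "\<And>i. i < n \<Longrightarrow> P i > 0 \<and> Q i > 0" using assms by (auto simp: Gamma_def)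
  have key: "(\<Sum>i<n. 3/2*(P i*ln(2*P i/(P i+Q i)) + Q i*ln(2*Q i/(P i+Q i))))
     \<le> (\<Sum>i<n. (sqrt (P i) - sqrt (Q i))^2 + (P i-Q i)^2/(4*(P i+Q i)))"
    by (rule sum_mono) (use pos termwise in auto)
  have e1: "3 * jensen_shannon n P Q = (\<Sum>i<n. 3/2*(P i*ln(2*P i/(P i+Q i)) + Q i*ln(2*Q i/(P i+Q i))))"
  proof -
    have "3 * jensen_shannon n P Q = 3/2 * ((\<Sum>i<n. P i*ln(2*P i/(P i+Q i))) + (\<Sum>i<n. Q i*ln(2*Q i/(P i+Q i))))"
      unfolding jensen_shannon_def by simp
    also have "... = (\<Sum>i<n. 3/2*(P i*ln(2*P i/(P i+Q i)) + Q i*ln(2*Q i/(P i+Q i))))"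
      by (simp only: sum.distrib[symmetric] sum_distrib_left)
    finally show ?thesis .
  qed
  have e2: "2 * hellinger n P Q + 1/4 * triangular n P Q = (\<Sum>i<n. (sqrt (P i) - sqrt (Q i))^2 + (P i-Q i)^2/(4*(P i+Q i)))"
    unfolding hellinger_def triangular_def by (simp add: sum.distrib sum_distrib_left sum_divide_distrib)
  have "3 * jensen_shannon n P Q \<le> 2 * hellinger n P Q + 1/4 * triangular n P Q"
    using key unfolding e1 e2 .
  then show ?thesis unfolding D_hDelta_def D_hI_def right_diff_distrib by linarith
qed

theorem proposition5p2:
  fixes n :: nat and P Q :: "nat \<Rightarrow> real"
  assumes "n \<ge> 2" and "P \<in> Gamma n" and "Q \<in> Gamma n"
  shows "D_hDelta n P Q \<le> 3 * D_hI n P Q"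
  using main_ineq assms(2,3) by blast

end
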